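(* Let $H$ be a graph with a cut edge $e=(u,w)$. Then for every pattern $\mathbf{s}$ with $N(H)\mathbf{s}=\mathbf{1}$, either $\mathbf{s}(u)=0$ or $\mathbf{s}(w)=0$.
   Context: For a finite simple graph $H$ with vertex set $\{v_1,\dots,v_n\}$, the closed adjacency matrix $N(H)$ is the $n\times n$ matrix over $\mathbb{Z}_2$ whose $(i,j)$ entry is $1$ iff $i=j$ or $v_i$ is adjacent to $v_j$; patterns are vectors in $\mathbb{Z}_2^{V(H)}$ and $\mathbf{1}$ is the all-ones vector. A cut edge is an edge whose deletion increases the number of connected components. *)

theory Defs
  imports Main "HOL-Library.Z2"
begin

definition simple_graph :: "'a set \<Rightarrow> ('a \<Rightarrow> 'a \<Rightarrow> bool) \<Rightarrow> bool" where
  "simple_graph V E \<longleftrightarrow> finite V \<and> (\<forall>x y. E x y \<longrightarrow> x \<in> V \<and> y \<in> V)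
     \<and> (\<forall>x y. E x y \<longrightarrow> E y x) \<and> (\<forall>x. \<not> E x x)"

definition closed_adj :: "('a \<Rightarrow> 'a \<Rightarrow> bool) \<Rightarrow> 'a \<Rightarrow> 'a \<Rightarrow> bit" where
  "closed_adj E x y = (if x = y \<or> E x y then 1 else 0)"

definition closed_adj_mult :: "'a set \<Rightarrow> ('a \<Rightarrow> 'a \<Rightarrow> bool) \<Rightarrow> ('a \<Rightarrow> bit) \<Rightarrow> 'a \<Rightarrow> bit" where
  "closed_adj_mult V E s x = (\<Sum>y\<in>V. closed_adj E x y * s y)"

definition conn_rel :: "'a set \<Rightarrow> ('a \<Rightarrow> 'a \<Rightarrow> bool) \<Rightarrow> ('a \<times> 'a) set" where
  "conn_rel V E = ({(x, y). x \<in> V \<and> y \<in> V \<and> E x y})\<^sup>* \<inter> (V \<times> V)"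

definition num_components :: "'a set \<Rightarrow> ('a \<Rightarrow> 'a \<Rightarrow> bool) \<Rightarrow> nat" where
  "num_components V E = card (V // conn_rel V E)"

definition delete_edge :: "('a \<Rightarrow> 'a \<Rightarrow> bool) \<Rightarrow> 'a \<Rightarrow> 'a \<Rightarrow> 'a \<Rightarrow> 'a \<Rightarrow> bool" where
  "delete_edge E u w = (\<lambda>x y. E x y \<and> {x, y} \<noteq> {u, w})"

definition cut_edge :: "'a set \<Rightarrow> ('a \<Rightarrow> 'a \<Rightarrow> bool) \<Rightarrow> 'a \<Rightarrow> 'a \<Rightarrow> bool" where
  "cut_edge V E u w \<longleftrightarrow> E u w \<and>
     num_components V (delete_edge E u w) > num_components V E"

end

theory Submission
  imports Defs
begin

lemma bit_cases2: "(x::bit) = 0 \<or> x = 1"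
  using bit_not_zero_iff by blast

lemma bit_add_self: "(x::bit) + x = 0"
  using bit_cases2[of x] by auto

lemma bit_mult_self: "(x::bit) * x = x"
  using bit_cases2[of x] by auto

declare add_bit_eq_xor[simp del] mult_bit_eq_and[simp del]

lemma sym_double_sum:
  fixes f :: "'a \<Rightarrow> 'a \<Rightarrow> bit"
  assumes "finite C" and "\<And>x y. f x y = f y x"
  shows "(\<Sum>x\<in>C. \<Sum>y\<in>C. f x y) = (\<Sum>x\<in>C. f x x)"
  using assms(1)
proof (induction C rule: finite_induct)
  case empty
  then show ?case by simp
next
  case (insert a C)
  have "(\<Sum>x\<in>insert a C. \<Sum>y\<in>insert a C. f x y)
      = (f a a + (\<Sum>y\<in>C. f a y)) + (\<Sum>x\<in>C. f x a + (\<Sum>y\<in>C. f x y))"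
    by (simp only: sum.insert[OF insert.hyps])
  also have "\<dots> = f a a + ((\<Sum>y\<in>C. f a y) + (\<Sum>x\<in>C. f x a)) + (\<Sum>x\<in>C. \<Sum>y\<in>C. f x y)"
    by (simp only: sum.distrib add.assoc add.left_commute)
  also have "(\<Sum>x\<in>C. f x a) = (\<Sum>y\<in>C. f a y)" using assms(2) by (intro sum.cong) auto
  also have "(\<Sum>y\<in>C. f a y) + (\<Sum>y\<in>C. f a y) = 0" by (rule bit_add_self)
  finally show ?case using insert.IH by (simp only: sum.insert[OF insert.hyps] add_0_right add_0_left)
qed

theorem lemma3p1:
  fixes V :: "'a set" and E :: "'a \<Rightarrow> 'a \<Rightarrow> bool" and u w :: 'a and s :: "'a \<Rightarrow> bit"
  assumes "simple_graph V E"
    and "cut_edge V E u w"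
    and "\<forall>x\<in>V. closed_adj_mult V E s x = 1"
  shows "s u = 0 \<or> s w = 0"
proof -
  define E' where "E' = delete_edge E u w"
  define R where "R = {(x, y). x \<in> V \<and> y \<in> V \<and> E x y}"
  define R' where "R' = {(x, y). x \<in> V \<and> y \<in> V \<and> E' x y}"
  have fin: "finite V" and EV: "\<And>x y. E x y \<Longrightarrow> x \<in> V \<and> y \<in> V"
    and Esym: "\<And>x y. E x y \<Longrightarrow> E y x" and Eirr: "\<And>x. \<not> E x x"
    using assms(1) unfolding simple_graph_def by auto
  have Euw: "E u w" and more: "num_components V E' > num_components V E"
    using assms(2) unfolding cut_edge_def E'_def by auto
  have uV: "u \<in> V" and wV: "w \<in> V" using EV[OF Euw] by auto
  have uw: "u \<noteq> w" using Euw Eirr by auto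
  have E'D: "E' x y \<longleftrightarrow> E x y \<and> {x, y} \<noteq> {u, w}" for x y
    unfolding E'_def delete_edge_def by simp
  have R'symm: "sym R'" unfolding sym_def R'_def using E'D Esym by (auto simp: insert_commute)
  have R'sub: "R' \<subseteq> R" unfolding R'_def R_def using E'D by auto
  define C where "C = {x \<in> V. (u, x) \<in> R'\<^sup>*}"
  have uC: "u \<in> C" unfolding C_def using uV by simp
  have wC: "w \<notin> C"
  proof
    assume "w \<in> C"
    hence uwR: "(u, w) \<in> R'\<^sup>*" unfolding C_def by simp
    have wuR: "(w, u) \<in> R'\<^sup>*" using uwR R'symm
      by (metis sym_conv_converse_eq rtrancl_converseI)
    have "R \<subseteq> R'\<^sup>*"
    proof
      fix p assume "p \<in> R"
      then obtain x y where p: "p = (x, y)" "x \<in> V" "y \<in> V" "E x y" unfolding R_def by auto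
      show "p \<in> R'\<^sup>*"
      proof (cases "{x, y} = {u, w}")
        case True
        then have "(x = u \<and> y = w) \<or> (x = w \<and> y = u)" by (auto simp: doubleton_eq_iff)
        then show ?thesis using p uwR wuR by auto
      next
        case False
        then have "(x, y) \<in> R'" unfolding R'_def using p E'D by auto
        then show ?thesis using p by auto
      qed
    qed
    hence "R\<^sup>* \<subseteq> R'\<^sup>*" by (metis rtrancl_subset_rtrancl)
    moreover have "R'\<^sup>* \<subseteq> R\<^sup>*" using R'sub by (rule rtrancl_mono)
    ultimately have "R\<^sup>* = R'\<^sup>*" by blast
    hence "conn_rel V E' = conn_rel V E"
      unfolding conn_rel_def R_def R'_def by simp
    thus False using more unfolding num_components_def by simp
  qed
  have CV: "C \<subseteq> V" unfolding C_def by auto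
  have finC: "finite C" using fin CV finite_subset by blast
  have nb: "y \<in> C \<or> (x = u \<and> y = w)" if "x \<in> C" "y \<in> V" "E x y" for x y
  proof (cases "{x, y} = {u, w}")
    case True
    then have "(x = u \<and> y = w) \<or> (x = w \<and> y = u)" by (auto simp: doubleton_eq_iff)
    then show ?thesis using that wC by auto
  next
    case False
    then have "(x, y) \<in> R'" unfolding R'_def using that CV E'D by auto
    then show ?thesis using that unfolding C_def by (auto intro: rtrancl_into_rtrancl)
  qed
  define c where "c = closed_adj E"
  have csym: "c x y = c y x" for x y unfolding c_def closed_adj_def using Esym by auto
  have rowsplit: "closed_adj_mult V E s x = (\<Sum>y\<in>C. c x y * s y) + (if x = u then s w else 0)"
    if xC: "x \<in> C" for x
  proof -
    have "closed_adj_mult V E s x = (\<Sum>y\<in>C. c x y * s y) + (\<Sum>y\<in>V - C. c x y * s y)"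
      unfolding closed_adj_mult_def c_def
      by (rule trans[OF sum.subset_diff[OF CV fin] add.commute])
    moreover have "(\<Sum>y\<in>V - C. c x y * s y) = (\<Sum>y\<in>V - C. if y = w then (if x = u then s w else 0) else 0)"
    proof (rule sum.cong)
      fix y assume y: "y \<in> V - C"
      then have "x \<noteq> y" using xC by auto
      have "E x y \<longleftrightarrow> (x = u \<and> y = w)"
        using nb[OF xC, of y] y Euw by auto
      then show "c x y * s y = (if y = w then (if x = u then s w else 0) else 0)"
        using \<open>x \<noteq> y\<close> unfolding c_def closed_adj_def by (cases "y = w"; cases "x = u") simp_all
    qed simp
    moreover have "\<dots> = (if x = u then s w else 0)"
      using fin wV wC by (simp add: sum.delta)
    ultimately show ?thesis by simp
  qed
  have "(\<Sum>x\<in>C. s x) = (\<Sum>x\<in>C. s x * closed_adj_mult V E s x)"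
    using assms(3) CV by (intro sum.cong) auto
  also have "\<dots> = (\<Sum>x\<in>C. (\<Sum>y\<in>C. s x * c x y * s y) + (if x = u then s x * s w else 0))"
    using rowsplit by (intro sum.cong) (auto simp: sum_distrib_left algebra_simps)
  also have "\<dots> = (\<Sum>x\<in>C. \<Sum>y\<in>C. s x * c x y * s y) + s u * s w"
    using finC uC by (simp add: sum.distrib sum.delta)
  also have "(\<Sum>x\<in>C. \<Sum>y\<in>C. s x * c x y * s y) = (\<Sum>x\<in>C. s x * c x x * s x)"
    using finC by (rule sym_double_sum) (simp add: csym algebra_simps)
  also have "\<dots> = (\<Sum>x\<in>C. s x)"
    by (intro sum.cong) (auto simp: c_def closed_adj_def mult.commute[of _ "s _"] bit_mult_self)
  finally have "s u * s w = 0"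
    by (metis add_left_cancel add.right_neutral)
  thus ?thesis by simp
qed

end
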